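(* Let $a,b,c,d$ be admissible TDL parameters. (i) Let $V$ be a Gamma random variable with Laplace transform $E[e^{-tV}]=(1+bdt)^{-1/d}$, and let $X$ be a random variable whose conditional law given $V$ is $\mathrm{TDS}(a,V,c)$. Then $X\sim\mathrm{TDL}(a,b,c,d)$. (ii) If moreover $c\in(0,1]$, let $W$ be Gamma with Laplace transform $(1+bdc^a t)^{-1/d}$, let $Y$ have conditional law $\mathrm{TPS}(a,W,1/c-1)$ given $W$, and let $X'$ have conditional law Poisson with mean $Y$ given $(W,Y)$. Then $X'\sim\mathrm{TDL}(a,b,c,d)$.
   Context: $\operatorname{sgn}$ is the sign function with $\operatorname{sgn}(0)=0$. $\mathrm{TDS}(a,b,c)$: law on $\mathbb{N}$ with pgf $\exp(\operatorname{sgn}(a)b((1-c)^a-(1-cs)^a))$, $s\in[0,1]$ (the formula defines the law for any $b>0$ and admissible $a,c$). $\mathrm{TDL}(a,b,c,d)$: law on $\mathbb{N}$ with pgf $\big(1+\operatorname{sgn}(a)\,b\,d\,((1-cs)^a-(1-c)^a)\big)^{-1/d}$, $s\in[0,1]$; admissible parameters: $d>0$, $b>0$, and either $a\le0$, $c\in[0,1)$, or $a\in(0,1]$, $c\in[0,1]$. $\mathrm{TPS}(\gamma,\lambda,\theta)$ (Tweedie / tempered positive stable law): the law on $[0,\infty)$ with Laplace transform $\exp\big(\operatorname{sgn}(\gamma)\lambda(\theta^\gamma-(\theta+t)^\gamma)\big)$, $\mathrm{Re}(t)>0$, for $\lambda>0$ and either $\gamma\le1$, $\theta>0$, or $\gamma\in(0,1]$,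 $\theta=0$. Poisson with mean $0$ is the point mass at $0$. *)

theory Defs
  imports "HOL-Probability.Probability"
begin

definition pgf :: "nat measure \<Rightarrow> real \<Rightarrow> real" where
  "pgf N s = (\<integral>n. s ^ n \<partial>N)"

definition TDL_admissible :: "real \<Rightarrow> real \<Rightarrow> real \<Rightarrow> real \<Rightarrow> bool" where
  "TDL_admissible a b c d \<longleftrightarrow> d > 0 \<and> b > 0 \<and>
     ((a \<le> 0 \<and> 0 \<le> c \<and> c < 1) \<or> (0 < a \<and> a \<le> 1 \<and> 0 \<le> c \<and> c \<le> 1))"

definition TDS_law :: "real \<Rightarrow> real \<Rightarrow> real \<Rightarrow> nat measure \<Rightarrow> bool" where
  "TDS_law a b c N \<longleftrightarrow> prob_space N \<and> sets N = sets (count_space UNIV) \<and>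
     (\<forall>s\<in>{0..1}. pgf N s = exp (sgn a * b * ((1 - c) powr a - (1 - c * s) powr a)))"

definition TDL_law :: "real \<Rightarrow> real \<Rightarrow> real \<Rightarrow> real \<Rightarrow> nat measure \<Rightarrow> bool" where
  "TDL_law a b c d N \<longleftrightarrow> prob_space N \<and> sets N = sets (count_space UNIV) \<and>
     (\<forall>s\<in>{0..1}. pgf N s =
        (1 + sgn a * b * d * ((1 - c * s) powr a - (1 - c) powr a)) powr (- 1 / d))"

definition TPS_law :: "real \<Rightarrow> real \<Rightarrow> real \<Rightarrow> real measure \<Rightarrow> bool" where
  "TPS_law \<gamma> lam \<theta> P \<longleftrightarrow> prob_space P \<and> sets P = sets borel \<and> emeasure P {..<0} = 0 \<and>
     (\<forall>t::complex. Re t > 0 \<longrightarrow>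
        (\<integral>x. exp (- t * complex_of_real x) \<partial>P) =
        exp (complex_of_real (sgn \<gamma> * lam) *
             (complex_of_real \<theta> powr complex_of_real \<gamma>
              - (complex_of_real \<theta> + t) powr complex_of_real \<gamma>)))"

text \<open>Poisson law with mean mu >= 0 (mean 0 gives the point mass at 0, as 0^0 = 1).\<close>
definition poisson_law :: "real \<Rightarrow> nat measure" where
  "poisson_law \<mu> = density (count_space UNIV) (\<lambda>n. ennreal (exp (- \<mu>) * \<mu> ^ n / fact n))"

definition cond_law ::
  "'a measure \<Rightarrow> ('a \<Rightarrow> 'b) \<Rightarrow> 'b measure \<Rightarrow> ('a \<Rightarrow> 'c) \<Rightarrow> 'c measure \<Rightarrow> ('b \<Rightarrow> 'c measure) \<Rightarrow> bool"
  where
  "cond_law M V MV X MX K \<longleftrightarrow> K \<in> measurable MV (prob_algebra MX) \<and>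
     (\<forall>A\<in>sets MV. \<forall>C\<in>sets MX.
        measure M {\<omega>\<in>space M. V \<omega> \<in> A \<and> X \<omega> \<in> C} =
        (\<integral>\<omega>. indicator A (V \<omega>) * measure (K (V \<omega>)) C \<partial>M))"

end

theory Submission imports Defs "HOL-Real_Asymp.Real_Asymp" begin


lemma pemeq: "prob_space N \<Longrightarrow> emeasure N A = ennreal (measure N A)"
  by (simp add: finite_measure.emeasure_eq_measure prob_space_def)

lemma pint_bound: fixes f :: "'a \<Rightarrow> real"
  shows "prob_space N \<Longrightarrow> AE x in N. norm (f x) \<le> B \<Longrightarrow> f \<in> borel_measurable N \<Longrightarrow> integrable N f"
  using finite_measure.integrable_const_bound prob_space_def by blast

lemma cond_law_bind:
  assumes M: "prob_space M" and V: "V \<in> measurable M MV" and X: "X \<in> measurable M MX"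
    and cl: "cond_law M V MV X MX K"
  shows "distr M MX X = M \<bind> (\<lambda>\<omega>. K (V \<omega>))"
    and "(\<lambda>\<omega>. K (V \<omega>)) \<in> measurable M (subprob_algebra MX)"
    and "\<And>\<omega>. \<omega> \<in> space M \<Longrightarrow> prob_space (K (V \<omega>)) \<and> sets (K (V \<omega>)) = sets MX"
proof -
  have Kp: "K \<in> measurable MV (prob_algebra MX)" using cl by (simp add: cond_law_def)
  have Ks: "K \<in> measurable MV (subprob_algebra MX)" using measurable_prob_algebraD[OF Kp] .
  show KV: "(\<lambda>\<omega>. K (V \<omega>)) \<in> measurable M (subprob_algebra MX)" using measurable_compose[OF V Ks] .
  show prob: "\<And>\<omega>. \<omega> \<in> space M \<Longrightarrow> prob_space (K (V \<omega>)) \<and> sets (K (V \<omega>)) = sets MX"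
    using measurable_space[OF Kp] measurable_space[OF V] by (auto simp: space_prob_algebra)
  have ne: "space M \<noteq> {}" using M prob_space.not_empty by blast
  show "distr M MX X = M \<bind> (\<lambda>\<omega>. K (V \<omega>))"
  proof (rule measure_eqI)
    show "sets (distr M MX X) = sets (M \<bind> (\<lambda>\<omega>. K (V \<omega>)))"
      using sets_bind[OF _ ne, of "\<lambda>\<omega>. K (V \<omega>)" MX] prob by simp
    fix C assume "C \<in> sets (distr M MX X)"
    hence C: "C \<in> sets MX" by simp
    have "emeasure (distr M MX X) C = emeasure M (X -` C \<inter> space M)" by (rule emeasure_distr[OF X C])
    also have "X -` C \<inter> space M = {\<omega>\<in>space M. V \<omega> \<in> space MV \<and> X \<omega> \<in> C}"
      using measurable_space[OF V] by auto
    also have "emeasure M {\<omega>\<in>space M. V \<omega> \<in> space MV \<and> X \<omega> \<in> C}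
       = ennreal (measure M {\<omega>\<in>space M. V \<omega> \<in> space MV \<and> X \<omega> \<in> C})"
      by (simp add: pemeq[OF M])
    also have "measure M {\<omega>\<in>space M. V \<omega> \<in> space MV \<and> X \<omega> \<in> C}
       = (\<integral>\<omega>. indicator (space MV) (V \<omega>) * measure (K (V \<omega>)) C \<partial>M)"
      using cl C by (simp add: cond_law_def)
    also have "\<dots> = (\<integral>\<omega>. measure (K (V \<omega>)) C \<partial>M)"
      using measurable_space[OF V] by (intro Bochner_Integration.integral_cong) auto
    also have "ennreal \<dots> = (\<integral>\<^sup>+\<omega>. ennreal (measure (K (V \<omega>)) C) \<partial>M)"
    proof (rule nn_integral_eq_integral[symmetric])
      have m: "(\<lambda>\<omega>. measure (K (V \<omega>)) C) \<in> borel_measurable M"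
        using measurable_compose[OF KV measurable_measure_subprob_algebra[OF C]] by simp
      show "integrable M (\<lambda>\<omega>. measure (K (V \<omega>)) C)"
        using pint_bound[OF M, of _ 1, OF _ m] prob
        by (simp add: prob_space.prob_le_1)
    qed simp
    also have "\<dots> = (\<integral>\<^sup>+\<omega>. emeasure (K (V \<omega>)) C \<partial>M)"
      using prob by (intro nn_integral_cong) (simp add: pemeq)
    also have "\<dots> = emeasure (M \<bind> (\<lambda>\<omega>. K (V \<omega>))) C"
      by (rule emeasure_bind[OF ne KV C, symmetric])
    finally show "emeasure (distr M MX X) C = emeasure (M \<bind> (\<lambda>\<omega>. K (V \<omega>))) C" .
  qed
qed



lemma lim0: assumes "(k::real) > 0" "(d::real) > 0"
  shows "((\<lambda>t. (1 + k * t) powr (- 1 / d)) \<longlongrightarrow> 0) at_top"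
  using assms by real_asymp

lemma laplace_pos:
  fixes V :: "'a \<Rightarrow> real"
  assumes M: "prob_space M" and Vm: "V \<in> borel_measurable M" and k: "k > 0" and d: "d > 0"
    and lt: "\<forall>t\<ge>0. (\<integral>\<omega>. exp (- t * V \<omega>) \<partial>M) = (1 + k * t) powr (- 1 / d)"
  shows "AE \<omega> in M. V \<omega> > 0"
    and "\<And>t. t \<ge> 0 \<Longrightarrow> integrable M (\<lambda>\<omega>. exp (- t * V \<omega>))"
proof -
  show int: "integrable M (\<lambda>\<omega>. exp (- t * V \<omega>))" if t: "t \<ge> 0" for t
  proof (rule ccontr)
    assume "\<not> ?thesis"
    hence "(\<integral>\<omega>. exp (- t * V \<omega>) \<partial>M) = 0" by (rule not_integrable_integral_eq)
    moreover have "1 + k * t > 0" using k t by (simp add: add_pos_nonneg)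
    hence "(1 + k * t) powr (- 1 / d) > 0" by simp
    ultimately show False using lt t by simp
  qed
  interpret prob_space M by (rule M)
  define S where "S = {\<omega>\<in>space M. V \<omega> \<le> 0}"
  have S: "S \<in> sets M" unfolding S_def using Vm by measurable
  have le: "measure M S \<le> (1 + k * t) powr (- 1 / d)" if t: "t \<ge> 0" for t
  proof -
    have "measure M S = (\<integral>\<omega>. indicator S \<omega> \<partial>M)" using S by simp
    also have "\<dots> \<le> (\<integral>\<omega>. exp (- t * V \<omega>) \<partial>M)"
    proof (rule integral_mono)
      show "integrable M (indicator S :: 'a \<Rightarrow> real)" using S by (simp add: integrable_indicator_iff less_top[symmetric])
      show "integrable M (\<lambda>\<omega>. exp (- t * V \<omega>))" using int t .
      fix \<omega> assume "\<omega> \<in> space M"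
      show "indicator S \<omega> \<le> exp (- t * V \<omega>)"
      proof (cases "\<omega> \<in> S")
        case True
        hence "- t * V \<omega> \<ge> 0" using t unfolding S_def by (simp add: mult_nonneg_nonpos)
        thus ?thesis using True by simp
      qed simp
    qed
    finally show ?thesis using lt t by simp
  qed
  have "measure M S \<le> 0"
    using tendsto_le[OF _ lim0[OF k d] tendsto_const, of "measure M S"] le
    by (auto simp: eventually_at_top_linorder intro: exI[of _ 0])
  hence "emeasure M S = 0" by (simp add: emeasure_eq_measure measure_nonneg antisym)
  thus "AE \<omega> in M. V \<omega> > 0"
    by (subst AE_iff_measurable[OF S]) (auto simp: S_def)
qed



lemma pgf_nn:
  assumes N: "prob_space N" "sets N = sets (count_space UNIV)" and s: "s \<in> {0..1::real}"
  shows "(\<integral>\<^sup>+n. ennreal (s ^ n) \<partial>N) = ennreal (pgf N s)"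
proof -
  have m: "(\<lambda>n. s ^ n) \<in> borel_measurable N"
    by (subst measurable_cong_sets[OF N(2) refl]) simp
  have "integrable N (\<lambda>n. s ^ n)"
    using pint_bound[OF N(1), of _ 1, OF _ m] s by (simp add: power_le_one)
  thus ?thesis unfolding pgf_def using s by (intro nn_integral_eq_integral) auto
qed

lemma pgf_cond:
  assumes M: "prob_space M" and V: "V \<in> measurable M MV" and X: "X \<in> measurable M (count_space UNIV)"
    and cl: "cond_law M V MV X (count_space UNIV) K" and s: "s \<in> {0..1::real}"
  shows "(\<integral>\<^sup>+\<omega>. ennreal (s ^ X \<omega>) \<partial>M) = (\<integral>\<^sup>+\<omega>. (\<integral>\<^sup>+n. ennreal (s ^ n) \<partial>K (V \<omega>)) \<partial>M)"
    and "pgf (distr M (count_space UNIV) X) s = enn2real (\<integral>\<^sup>+\<omega>. ennreal (s ^ X \<omega>) \<partial>M)"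
    and "prob_space (distr M (count_space UNIV) X)"
proof -
  note cb = cond_law_bind[OF M V X cl]
  have "(\<integral>\<^sup>+\<omega>. ennreal (s ^ X \<omega>) \<partial>M) = (\<integral>\<^sup>+n. ennreal (s ^ n) \<partial>distr M (count_space UNIV) X)"
    by (rule nn_integral_distr[OF X, symmetric]) simp
  also have "\<dots> = (\<integral>\<^sup>+\<omega>. (\<integral>\<^sup>+n. ennreal (s ^ n) \<partial>K (V \<omega>)) \<partial>M)"
    unfolding cb(1) by (rule nn_integral_bind[OF _ cb(2)]) simp
  finally show "(\<integral>\<^sup>+\<omega>. ennreal (s ^ X \<omega>) \<partial>M) = (\<integral>\<^sup>+\<omega>. (\<integral>\<^sup>+n. ennreal (s ^ n) \<partial>K (V \<omega>)) \<partial>M)" .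
  have "pgf (distr M (count_space UNIV) X) s = (\<integral>\<omega>. s ^ X \<omega> \<partial>M)"
    unfolding pgf_def by (rule integral_distr[OF X]) simp
  also have "\<dots> = enn2real (\<integral>\<^sup>+\<omega>. ennreal (s ^ X \<omega>) \<partial>M)"
    using s X by (intro integral_eq_nn_integral) auto
  finally show "pgf (distr M (count_space UNIV) X) s = enn2real (\<integral>\<^sup>+\<omega>. ennreal (s ^ X \<omega>) \<partial>M)" .
  show "prob_space (distr M (count_space UNIV) X)"
    using M X by (simp add: prob_space.prob_space_distr)
qed

lemma lap_nn:
  assumes "integrable M (\<lambda>\<omega>. exp (- t * V \<omega>))" "(\<integral>\<omega>. exp (- t * V \<omega>) \<partial>M) = L"
  shows "(\<integral>\<^sup>+\<omega>. ennreal (exp (- t * V \<omega>)) \<partial>M) = ennreal L"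
  using assms by (subst nn_integral_eq_integral) auto

lemma poisson_pgf:
  assumes y: "y \<ge> 0" and s: "s \<in> {0..1::real}"
  shows "(\<integral>\<^sup>+n. ennreal (s ^ n) \<partial>poisson_law y) = ennreal (exp (- (1 - s) * y))"
proof -
  have "(\<integral>\<^sup>+n. ennreal (s ^ n) \<partial>poisson_law y)
      = (\<integral>\<^sup>+n. ennreal (exp (- y) * y ^ n / fact n) * ennreal (s ^ n) \<partial>count_space UNIV)"
    unfolding poisson_law_def by (subst nn_integral_density) auto
  also have "\<dots> = (\<Sum>n. ennreal (exp (- y) * ((y * s) ^ n / fact n)))"
    using y s by (subst nn_integral_count_space_nat) (simp add: ennreal_mult'[symmetric] power_mult_distrib mult.assoc)
  also have "\<dots> = ennreal (exp (- y) * exp (y * s))"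
  proof (rule suminf_ennreal_eq)
    show "\<And>n. 0 \<le> exp (- y) * ((y * s) ^ n / fact n)" using y s by simp
    show "(\<lambda>n. exp (- y) * ((y * s) ^ n / fact n)) sums (exp (- y) * exp (y * s))"
      using sums_mult[OF exp_converges[of "y * s"], of "exp (- y)"] by (simp add: divide_inverse mult.commute)
  qed
  also have "exp (- y) * exp (y * s) = exp (- (1 - s) * y)"
    by (simp add: exp_add[symmetric] algebra_simps)
  finally show ?thesis .
qed

lemma TPS_lt:
  assumes P: "TPS_law g w th P" and th: "th \<ge> 0" and tau: "tau > 0"
  shows "(\<integral>\<^sup>+x. ennreal (exp (- tau * x)) \<partial>P) = ennreal (exp (sgn g * w * (th powr g - (th + tau) powr g)))"
proof -
  have "(\<integral>x. exp (- complex_of_real tau * complex_of_real x) \<partial>P) =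
        exp (complex_of_real (sgn g * w) *
             (complex_of_real th powr complex_of_real g
              - (complex_of_real th + complex_of_real tau) powr complex_of_real g))"
    using P tau unfolding TPS_law_def by auto
  also have "\<dots> = complex_of_real (exp (sgn g * w * (th powr g - (th + tau) powr g)))"
    using th tau by (simp add: powr_of_real exp_of_real[symmetric] of_real_add[symmetric]
        del: of_real_add)
  finally have eq: "(\<integral>x. complex_of_real (exp (- tau * x)) \<partial>P) =
       complex_of_real (exp (sgn g * w * (th powr g - (th + tau) powr g)))"
    by (simp add: exp_of_real[symmetric])
  hence eq2: "(\<integral>x. exp (- tau * x) \<partial>P) = exp (sgn g * w * (th powr g - (th + tau) powr g))"
    by simp
  have "integrable P (\<lambda>x. complex_of_real (exp (- tau * x)))"
  proof (rule ccontr)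
    assume "\<not> ?thesis"
    hence "(\<integral>x. complex_of_real (exp (- tau * x)) \<partial>P) = 0" by (rule not_integrable_integral_eq)
    thus False using eq by simp
  qed
  hence "integrable P (\<lambda>x. Re (complex_of_real (exp (- tau * x))))" by (rule integrable_Re)
  hence "integrable P (\<lambda>x. exp (- tau * x))" by simp
  thus ?thesis using eq2 by (subst nn_integral_eq_integral) auto
qed



lemma tau_nonneg:
  assumes adm: "TDL_admissible a b c d" and s: "s \<in> {0..1::real}"
  shows "sgn a * ((1 - c * s) powr a - (1 - c) powr a) \<ge> 0"
proof -
  have cs: "c * s \<le> c" "0 \<le> c" using adm s unfolding TDL_admissible_def
    by (auto simp: mult_left_le)
  consider "a > 0" "c \<le> 1" | "a < 0" "c < 1" | "a = 0" using adm unfolding TDL_admissible_def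
    by (cases "a > 0"; cases "a < 0") auto
  thus ?thesis
  proof cases
    case 1
    hence "(1 - c) powr a \<le> (1 - c * s) powr a" using cs by (intro powr_mono2) auto
    thus ?thesis using 1 by simp
  next
    case 2
    hence "(1 - c * s) powr a \<le> (1 - c) powr a" using cs by (intro powr_mono2') auto
    thus ?thesis using 2 by (simp add: mult_nonpos_nonpos)
  qed simp
qed

lemma theta_eq:
  assumes c: "0 < c" "c \<le> 1" and s: "0 \<le> s" "s \<le> (1::real)"
  shows "(1 / c - 1) powr a - (1 / c - 1 + (1 - s)) powr a = ((1 - c) powr a - (1 - c * s) powr a) / c powr a"
proof -
  have e1: "1 / c - 1 = (1 - c) / c" using c by (simp add: field_simps)
  have e2: "1 / c - 1 + (1 - s) = (1 - c * s) / c" using c by (simp add: field_simps)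
  have "c * s \<le> 1" using c s by (metis mult_le_one less_imp_le)
  hence p1: "(1 / c - 1 + (1 - s)) powr a = (1 - c * s) powr a / c powr a"
    using c by (subst e2) (rule powr_divide)
  have p2: "(1 / c - 1) powr a = (1 - c) powr a / c powr a"
    using c by (subst e1) (rule powr_divide)
  show ?thesis unfolding p1 p2 by (simp add: diff_divide_distrib)
qed



theorem mainTheorem8:
  fixes a b c d :: real
  assumes adm: "TDL_admissible a b c d"
  shows
   "(\<forall>(M :: 'a measure) (V :: 'a \<Rightarrow> real) (X :: 'a \<Rightarrow> nat) (K :: real \<Rightarrow> nat measure).
       prob_space M \<and> V \<in> borel_measurable M \<and> X \<in> measurable M (count_space UNIV) \<and>
       (\<forall>t\<ge>0. (\<integral>\<omega>. exp (- t * V \<omega>) \<partial>M) = (1 + b * d * t) powr (- 1 / d)) \<and>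
       (\<forall>v>0. TDS_law a v c (K v)) \<and>
       cond_law M V borel X (count_space UNIV) K
       \<longrightarrow> TDL_law a b c d (distr M (count_space UNIV) X))
    \<and>
    (0 < c \<longrightarrow>
     (\<forall>(M :: 'b measure) (W :: 'b \<Rightarrow> real) (Y :: 'b \<Rightarrow> real) (X' :: 'b \<Rightarrow> nat)
        (K1 :: real \<Rightarrow> real measure) (K2 :: real \<times> real \<Rightarrow> nat measure).
       prob_space M \<and> W \<in> borel_measurable M \<and> Y \<in> borel_measurable M \<and>
       X' \<in> measurable M (count_space UNIV) \<and>
       (\<forall>t\<ge>0. (\<integral>\<omega>. exp (- t * W \<omega>) \<partial>M) = (1 + b * d * c powr a * t) powr (- 1 / d)) \<and>
       (\<forall>w>0. TPS_law a w (1 / c - 1) (K1 w)) \<and>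
       cond_law M W borel Y borel K1 \<and>
       (\<forall>w y. y \<ge> 0 \<longrightarrow> K2 (w, y) = poisson_law y) \<and>
       cond_law M (\<lambda>\<omega>. (W \<omega>, Y \<omega>)) (borel \<Otimes>\<^sub>M borel) X' (count_space UNIV) K2
       \<longrightarrow> TDL_law a b c d (distr M (count_space UNIV) X')))"
proof (intro conjI impI allI)
  have d: "d > 0" and b: "b > 0" and c1: "c \<le> 1" and c0: "0 \<le> c"
    using adm unfolding TDL_admissible_def by auto
  have bd: "b * d > 0" using b d by simp
  fix M :: "'a measure" and V :: "'a \<Rightarrow> real" and X :: "'a \<Rightarrow> nat" and K :: "real \<Rightarrow> nat measure"
  assume H: "prob_space M \<and> V \<in> borel_measurable M \<and> X \<in> measurable M (count_space UNIV) \<and>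
       (\<forall>t\<ge>0. (\<integral>\<omega>. exp (- t * V \<omega>) \<partial>M) = (1 + b * d * t) powr (- 1 / d)) \<and>
       (\<forall>v>0. TDS_law a v c (K v)) \<and>
       cond_law M V borel X (count_space UNIV) K"
  hence M: "prob_space M" and Vm: "V \<in> borel_measurable M" and Xm: "X \<in> measurable M (count_space UNIV)"
    and lt: "\<forall>t\<ge>0. (\<integral>\<omega>. exp (- t * V \<omega>) \<partial>M) = (1 + b * d * t) powr (- 1 / d)"
    and TDS: "\<forall>v>0. TDS_law a v c (K v)"
    and cl: "cond_law M V borel X (count_space UNIV) K" by auto
  note lp = laplace_pos[OF M Vm bd d lt]
  show "TDL_law a b c d (distr M (count_space UNIV) X)"
    unfolding TDL_law_def
  proof (intro conjI ballI)
    show "prob_space (distr M (count_space UNIV) X)" using pgf_cond(3)[OF M Vm Xm cl, of 0] by simp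
    show "sets (distr M (count_space UNIV) X) = sets (count_space UNIV)" by simp
    fix s :: real assume s: "s \<in> {0..1}"
    define tau where "tau = sgn a * ((1 - c * s) powr a - (1 - c) powr a)"
    have tau: "tau \<ge> 0" unfolding tau_def using tau_nonneg[OF adm s] .
    note pc = pgf_cond[OF M Vm Xm cl s]
    have "(\<integral>\<^sup>+\<omega>. ennreal (s ^ X \<omega>) \<partial>M) = (\<integral>\<^sup>+\<omega>. ennreal (exp (- tau * V \<omega>)) \<partial>M)"
      unfolding pc(1)
    proof (rule nn_integral_cong_AE)
      show "AE \<omega> in M. (\<integral>\<^sup>+n. ennreal (s ^ n) \<partial>K (V \<omega>)) = ennreal (exp (- tau * V \<omega>))"
        using lp(1)
      proof eventually_elim
        case (elim \<omega>)
        hence T: "TDS_law a (V \<omega>) c (K (V \<omega>))" using TDS by simp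
        hence "(\<integral>\<^sup>+n. ennreal (s ^ n) \<partial>K (V \<omega>)) = ennreal (pgf (K (V \<omega>)) s)"
          using s unfolding TDS_law_def by (intro pgf_nn) auto
        also have "pgf (K (V \<omega>)) s = exp (sgn a * V \<omega> * ((1 - c) powr a - (1 - c * s) powr a))"
          using T s unfolding TDS_law_def by auto
        also have "\<dots> = exp (- tau * V \<omega>)" unfolding tau_def by (simp add: algebra_simps)
        finally show ?case .
      qed
    qed
    also have "\<dots> = ennreal ((1 + b * d * tau) powr (- 1 / d))"
      using lt tau by (intro lap_nn lp(2)) auto
    finally have "pgf (distr M (count_space UNIV) X) s = (1 + b * d * tau) powr (- 1 / d)"
      unfolding pc(2) by simp
    thus "pgf (distr M (count_space UNIV) X) s =
        (1 + sgn a * b * d * ((1 - c * s) powr a - (1 - c) powr a)) powr (- 1 / d)"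
      unfolding tau_def by (simp add: algebra_simps)
  qed
next
  have d: "d > 0" and b: "b > 0" and c1: "c \<le> 1" and c0: "0 \<le> c"
    using adm unfolding TDL_admissible_def by auto
  assume cpos: "0 < c"
  have bd: "b * d * c powr a > 0" using b d cpos by simp
  fix M :: "'b measure" and W Y :: "'b \<Rightarrow> real" and X' :: "'b \<Rightarrow> nat"
    and K1 :: "real \<Rightarrow> real measure" and K2 :: "real \<times> real \<Rightarrow> nat measure"
  assume H: "prob_space M \<and> W \<in> borel_measurable M \<and> Y \<in> borel_measurable M \<and>
       X' \<in> measurable M (count_space UNIV) \<and>
       (\<forall>t\<ge>0. (\<integral>\<omega>. exp (- t * W \<omega>) \<partial>M) = (1 + b * d * c powr a * t) powr (- 1 / d)) \<and>
       (\<forall>w>0. TPS_law a w (1 / c - 1) (K1 w)) \<and>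
       cond_law M W borel Y borel K1 \<and>
       (\<forall>w y. y \<ge> 0 \<longrightarrow> K2 (w, y) = poisson_law y) \<and>
       cond_law M (\<lambda>\<omega>. (W \<omega>, Y \<omega>)) (borel \<Otimes>\<^sub>M borel) X' (count_space UNIV) K2"
  hence M: "prob_space M" and Wm: "W \<in> borel_measurable M" and Ym: "Y \<in> borel_measurable M"
    and Xm: "X' \<in> measurable M (count_space UNIV)"
    and lt: "\<forall>t\<ge>0. (\<integral>\<omega>. exp (- t * W \<omega>) \<partial>M) = (1 + b * d * c powr a * t) powr (- 1 / d)"
    and TPS: "\<forall>w>0. TPS_law a w (1 / c - 1) (K1 w)"
    and clY: "cond_law M W borel Y borel K1"
    and K2: "\<forall>w y. y \<ge> 0 \<longrightarrow> K2 (w, y) = poisson_law y"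
    and clX: "cond_law M (\<lambda>\<omega>. (W \<omega>, Y \<omega>)) (borel \<Otimes>\<^sub>M borel) X' (count_space UNIV) K2"
    by auto
  have WYm: "(\<lambda>\<omega>. (W \<omega>, Y \<omega>)) \<in> measurable M (borel \<Otimes>\<^sub>M borel)"
    using Wm Ym by (rule measurable_Pair)
  note lp = laplace_pos[OF M Wm bd d lt]
  note cbY = cond_law_bind[OF M Wm Ym clY]
  have ne: "space M \<noteq> {}" using M prob_space.not_empty by blast
  have th: "1 / c - 1 \<ge> 0" using cpos c1 by simp
  have Ynn: "AE \<omega> in M. Y \<omega> \<ge> 0"
  proof -
    have "emeasure (distr M borel Y) {..<0} = (\<integral>\<^sup>+\<omega>. emeasure (K1 (W \<omega>)) {..<0} \<partial>M)"
      unfolding cbY(1) by (rule emeasure_bind[OF ne cbY(2)]) simp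
    also have "\<dots> = (\<integral>\<^sup>+\<omega>. 0 \<partial>M)"
    proof -
      have z: "\<And>w. w > 0 \<Longrightarrow> emeasure (K1 w) {..<0} = 0" using TPS by (simp add: TPS_law_def)
      show ?thesis using lp(1) by (intro nn_integral_cong_AE) (auto elim!: eventually_mono simp: z)
    qed
    finally have "emeasure M (Y -` {..<0} \<inter> space M) = 0"
      by (simp add: emeasure_distr[OF Ym])
    moreover have "Y -` {..<0} \<inter> space M \<in> sets M" using Ym by measurable
    ultimately show ?thesis by (subst AE_iff_measurable) auto
  qed
  show "TDL_law a b c d (distr M (count_space UNIV) X')"
    unfolding TDL_law_def
  proof (intro conjI ballI)
    show "prob_space (distr M (count_space UNIV) X')" using pgf_cond(3)[OF M WYm Xm clX, of 0] by simp
    show "sets (distr M (count_space UNIV) X') = sets (count_space UNIV)" by simp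
    fix s :: real assume s: "s \<in> {0..1}"
    note pc = pgf_cond[OF M WYm Xm clX s]
    show "pgf (distr M (count_space UNIV) X') s =
        (1 + sgn a * b * d * ((1 - c * s) powr a - (1 - c) powr a)) powr (- 1 / d)"
    proof (cases "s = 1")
      case True
      interpret P: prob_space "distr M (count_space UNIV) X'" by (rule pc(3))
      show ?thesis using True P.prob_space by (simp add: pgf_def)
    next
      case False
      hence s1: "s < 1" using s by simp
      define tau where "tau = 1 - s"
      have tau: "tau > 0" using s1 unfolding tau_def by simp
      define tau' where "tau' = sgn a * ((1 / c - 1 + tau) powr a - (1 / c - 1) powr a)"
      have tau'eq: "tau' = sgn a * ((1 - c * s) powr a - (1 - c) powr a) / c powr a"
      proof -
        have "(1 / c - 1 + tau) powr a - (1 / c - 1) powr a = - (((1 - c) powr a - (1 - c * s) powr a) / c powr a)"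
          using theta_eq[OF cpos c1, of s a] s unfolding tau_def by (simp del: minus_divide_left)
        also have "\<dots> = ((1 - c * s) powr a - (1 - c) powr a) / c powr a"
          by (simp only: minus_divide_left minus_diff_eq)
        finally show ?thesis unfolding tau'_def by simp
      qed
      have tau': "tau' \<ge> 0" unfolding tau'eq using tau_nonneg[OF adm s] by simp
      have "(\<integral>\<^sup>+\<omega>. ennreal (s ^ X' \<omega>) \<partial>M) = (\<integral>\<^sup>+\<omega>. ennreal (exp (- tau * Y \<omega>)) \<partial>M)"
        unfolding pc(1)
        using Ynn by (intro nn_integral_cong_AE)
          (auto elim!: eventually_mono simp: K2 poisson_pgf[OF _ s] tau_def)
      also have "\<dots> = (\<integral>\<^sup>+y. ennreal (exp (- tau * y)) \<partial>distr M borel Y)"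
        by (rule nn_integral_distr[OF Ym, symmetric]) simp
      also have "\<dots> = (\<integral>\<^sup>+\<omega>. (\<integral>\<^sup>+y. ennreal (exp (- tau * y)) \<partial>K1 (W \<omega>)) \<partial>M)"
        unfolding cbY(1) by (rule nn_integral_bind[OF _ cbY(2)]) simp
      also have "\<dots> = (\<integral>\<^sup>+\<omega>. ennreal (exp (- tau' * W \<omega>)) \<partial>M)"
        using lp(1)
      proof (intro nn_integral_cong_AE, eventually_elim)
        case (elim \<omega>)
        have "(\<integral>\<^sup>+y. ennreal (exp (- tau * y)) \<partial>K1 (W \<omega>)) =
          ennreal (exp (sgn a * W \<omega> * ((1 / c - 1) powr a - (1 / c - 1 + tau) powr a)))"
          using TPS elim by (intro TPS_lt[OF _ th tau]) auto
        also have "\<dots> = ennreal (exp (- tau' * W \<omega>))" unfolding tau'_def by (simp add: algebra_simps)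
        finally show ?case .
      qed
      also have "\<dots> = ennreal ((1 + b * d * c powr a * tau') powr (- 1 / d))"
        using lt tau' by (intro lap_nn lp(2)) auto
      finally have "pgf (distr M (count_space UNIV) X') s = (1 + b * d * c powr a * tau') powr (- 1 / d)"
        unfolding pc(2) by simp
      also have "b * d * c powr a * tau' = sgn a * b * d * ((1 - c * s) powr a - (1 - c) powr a)"
        unfolding tau'eq using cpos by simp
      finally show ?thesis .
    qed
  qed
qed


end
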